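(* Let $F:\mathbb{R}^N\to\mathbb{R}\cup\{+\infty\}$ be convex, proper and lower semicontinuous, let $A\in C^1(\operatorname{dom}F;\mathbb{R}^M)$, and let $J(x):=\frac12\|A(x)\|^2+F(x)$. Let $z^0\in\operatorname{dom}F$ be such that Assumption 2.1 holds with constants $\mathfrak d, C>0$. Let $\beta>0$ and $\varepsilon\in(0,\beta)$, and let the relaxation parameter $w$ satisfy $$0<w\le\min\Big\{1,\ \frac{\mathfrak d}{\sqrt{2\beta^{-1}(J(z^0)-\inf F)}},\ \frac{\beta-\varepsilon}{2CA_{\max}}\Big\}$$ (the middle term being read as $+\infty$ if $J(z^0)=\inf F$). Generate $\{z^k\}_{k\ge0}$ by the relaxed inexact proximal Gauss–Newton iteration $z^{k+1}:=(1-w)z^k+w\tilde x^k$, where for each $k$ the point $\tilde x^k$ is an approximate minimiser of $\tilde J_k$ satisfying: 1. there exist $e^k\in\partial\tilde J_k(\tilde x^k)$ with $e^k\to0$ as $k\to\infty$; and 2. either $\tilde J_k(z^k)\ge\tilde J_k(\tilde x^k)$ and $\tilde x^k\ne z^k$, or $\tilde x^k=z^k$ and $0\in\partial\tilde J_k(z^k)$. Then: (i) $\{J(z^k)\}$ is monotonically decreasing and $J(z^k)\searrow L$ for some $L\in\mathbb{R}$; (ii) every accumulation point $\hat x$ of $\{z^k\}$ is Clarke-critical, i.e. $0\in\partial_C J(\hat x)$, and satisfies $J(\hat x)=L$; (iii) with $V_L:=\{\hat x\in\operatorname{dom}F\mid 0\in\partial_CJ(\hat x),\ J(\hat x)=L\}$,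 the iterates approach a single disjoint component of $V_L$: whenever $V_L=U_1\cup U_2$ with $U_1,U_2$ disjoint closed sets, all accumulation points of $\{z^k\}$ lie in the same $U_j$, and $\operatorname{dist}(z^k,U_j)\to0$ for that $j$.
   Context: Notation: $\operatorname{dom}F:=\{x\mid F(x)<\infty\}$; $B(y;r)$ is the open ball, $\operatorname{cl}B(y;r)$ its closure; $\operatorname{lev}_cJ:=\{x\mid J(x)\le c\}$. For $y\in\operatorname{dom}F$, $\nabla A(y)\in\mathbb{R}^{N\times M}$ denotes the transpose of the Jacobian of $A$ at $y$ (so $\nabla A(y)^*$ is the Jacobian), and $\tilde A_y(x):=A(y)+\nabla A(y)^*(x-y)$ is the linearisation of $A$ at $y$. Assumption 2.1 (for the given $z^0$): $\operatorname{lev}_{J(z^0)}J$ is bounded, $\inf F>-\infty$, $A_{\max}:=\sup_{z\in\operatorname{dom}F}\|A(z)\|<\infty$, and there are $\mathfrak d,C>0$ with $\|A(x)-\tilde A_y(x)\|\le C\|x-y\|^2$ for all $y\in\operatorname{lev}_{J(z^0)}J$ and $x\in\operatorname{cl}B(y;\mathfrak d)$. Subproblems: $J_k(x):=\frac12\|\tilde A_{z^k}(x)\|^2+F(x)$ and $\tilde J_k(x):=J_k(x)+\frac\beta2\|x-z^k\|^2$ (both convex); $\partial$ denotes the convex subdifferential. The Clarke subdifferential of $J$ at $x\in\operatorname{dom}F$ is $\partial_CJ(x)=\nabla A(x)A(x)+\partial F(x)$ (where $\nabla A(x)A(x)=\nabla(\frac12\|A\|^2)(x)$), and $x$ is called Clarke-critical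 if $0\in\partial_CJ(x)$. *)

theory Defs
  imports "HOL-Analysis.Analysis"
begin

definition edom :: "('a \<Rightarrow> ereal) \<Rightarrow> 'a set" where
  "edom F = {x. F x < \<infinity>}"

definition proper_fun :: "('a \<Rightarrow> ereal) \<Rightarrow> bool" where
  "proper_fun F \<longleftrightarrow> (\<forall>x. F x \<noteq> -\<infinity>) \<and> (\<exists>x. F x < \<infinity>)"

definition econvex :: "('a::real_vector \<Rightarrow> ereal) \<Rightarrow> bool" where
  "econvex F \<longleftrightarrow> (\<forall>x y t. 0 < t \<and> t < 1 \<longrightarrow>
      F ((1 - t) *\<^sub>R x + t *\<^sub>R y) \<le> ereal (1 - t) * F x + ereal t * F y)"

definition elsc :: "('a::topological_space \<Rightarrow> ereal) \<Rightarrow> bool" where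
  "elsc F \<longleftrightarrow> (\<forall>x X. X \<longlonglongrightarrow> x \<longrightarrow> F x \<le> liminf (\<lambda>k. F (X k)))"

definition subdiff :: "('a::real_inner \<Rightarrow> ereal) \<Rightarrow> 'a \<Rightarrow> 'a set" where
  "subdiff G x = {g. G x < \<infinity> \<and> (\<forall>y. G x + ereal (g \<bullet> (y - x)) \<le> G y)}"

definition acc_point :: "(nat \<Rightarrow> 'a::topological_space) \<Rightarrow> 'a \<Rightarrow> bool" where
  "acc_point z x \<longleftrightarrow> (\<exists>r. strict_mono r \<and> (z \<circ> r) \<longlonglongrightarrow> x)"

text \<open>Linearisation of A at y, with Jac y the Jacobian (M x N matrix) of A at y.\<close>
definition linA :: "(real^'n \<Rightarrow> real^'m) \<Rightarrow> (real^'n \<Rightarrow> real^'n^'m) \<Rightarrow> real^'n \<Rightarrow> real^'n \<Rightarrow> real^'m" where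
  "linA A Jac y x = A y + Jac y *v (x - y)"

definition Jfun :: "(real^'n \<Rightarrow> real^'m) \<Rightarrow> (real^'n \<Rightarrow> ereal) \<Rightarrow> real^'n \<Rightarrow> ereal" where
  "Jfun A F x = ereal ((1/2) * (norm (A x))\<^sup>2) + F x"

text \<open>Clarke subdifferential of J = 1/2 |A|^2 + F at x in dom F:
  nabla A(x) A(x) + subdiff F x, where nabla A(x) = (Jacobian)^T.\<close>
definition clarke_subdiff :: "(real^'n \<Rightarrow> real^'m) \<Rightarrow> (real^'n \<Rightarrow> real^'n^'m) \<Rightarrow> (real^'n \<Rightarrow> ereal) \<Rightarrow> real^'n \<Rightarrow> (real^'n) set" where
  "clarke_subdiff A Jac F x = {transpose (Jac x) *v A x + g | g. g \<in> subdiff F x}"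

end

theory Submission
  imports Defs
begin

lemma tendsto_mv:
  fixes M :: "'a \<Rightarrow> real^'n^'m"
  assumes "(M \<longlongrightarrow> M0) F" "(x \<longlongrightarrow> x0) F"
  shows "((\<lambda>k. M k *v x k) \<longlongrightarrow> M0 *v x0) F"
  unfolding matrix_vector_mult_def
  apply (rule vec_tendstoI)
  apply (simp only: vec_lambda_beta)
  apply (rule tendsto_sum)
  apply (rule tendsto_mult)
   apply (rule tendsto_vec_nth, rule tendsto_vec_nth, rule assms(1))
  apply (rule tendsto_vec_nth, rule assms(2))
  done

lemma lsc_real:
  fixes F :: "'a::topological_space \<Rightarrow> ereal"
  assumes "elsc F"
    and "X \<longlonglongrightarrow> x" and "g \<longlonglongrightarrow> c" and "\<And>k. F (X k) \<le> ereal (g k)"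
  shows "F x \<le> ereal c"
proof -
  have "F x \<le> liminf (\<lambda>k. F (X k))" using assms(1,2) unfolding elsc_def by blast
  also have "\<dots> \<le> liminf (\<lambda>k. ereal (g k))" by (intro Liminf_mono) (auto simp: assms(4))
  also have "\<dots> = ereal c" by (intro lim_imp_Liminf) (auto intro!: tendsto_intros assms(3))
  finally show ?thesis .
qed

lemma dot_transpose:
  fixes M :: "real^'n^'m" and a :: "real^'m"
  shows "(transpose M *v a) \<bullet> h = a \<bullet> (M *v h)"
  by (simp add: transpose_matrix_vector dot_lmul_matrix)

lemma econv_dom:
  assumes "econvex F" "\<forall>x. F x \<noteq> -\<infinity>" "F x = ereal a" "F y = ereal b" "0 \<le> t" "t \<le> 1"
  shows "\<exists>c. F ((1-t) *\<^sub>R x + t *\<^sub>R y) = ereal c \<and> c \<le> (1-t)*a + t*b"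
proof -
  consider "t = 0" | "t = 1" | "0 < t \<and> t < 1" using assms by linarith
  then show ?thesis
  proof cases
    case 1 then show ?thesis using assms by auto
  next
    case 2 then show ?thesis using assms by auto
  next
    case 3
    then have le: "F ((1-t) *\<^sub>R x + t *\<^sub>R y) \<le> ereal ((1-t)*a + t*b)"
      using assms(1,3,4) unfolding econvex_def by (metis times_ereal.simps(1) plus_ereal.simps(1))
    then have "F ((1-t) *\<^sub>R x + t *\<^sub>R y) \<noteq> \<infinity>" by auto
    moreover have "F ((1-t) *\<^sub>R x + t *\<^sub>R y) \<noteq> -\<infinity>" using assms(2) by auto
    ultimately obtain c where "F ((1-t) *\<^sub>R x + t *\<^sub>R y) = ereal c" by (cases "F ((1-t) *\<^sub>R x + t *\<^sub>R y)") auto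
    with le show ?thesis by auto
  qed
qed

lemma norm2_convex:
  fixes p q :: "'a::real_inner"
  assumes "0 \<le> w" "w \<le> 1"
  shows "(norm ((1-w) *\<^sub>R p + w *\<^sub>R q))\<^sup>2 \<le> (1-w) * (norm p)\<^sup>2 + w * (norm q)\<^sup>2"
proof -
  have e: "(1-w) *\<^sub>R p + w *\<^sub>R q = p + w *\<^sub>R (q - p)" by (simp add: algebra_simps)
  have gen: "(norm (p + w *\<^sub>R u))\<^sup>2 = (norm p)\<^sup>2 + 2*w*(p \<bullet> u) + w^2 * (norm u)\<^sup>2" for u
    by (simp only: power2_norm_eq_inner inner_add_left inner_add_right inner_scaleR_left inner_scaleR_right)
       (simp add: inner_commute algebra_simps power2_eq_square)
  have "(norm (p + w *\<^sub>R (q - p)))\<^sup>2 = (norm p)\<^sup>2 + 2*w*(p \<bullet> (q-p)) + w^2 * (norm (q-p))\<^sup>2"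
    by (rule gen)
  moreover have "(1-w) * (norm p)\<^sup>2 + w * (norm q)\<^sup>2 = (norm p)\<^sup>2 + 2*w*(p \<bullet> (q-p)) + w * (norm (q-p))\<^sup>2"
    by (simp add: power2_norm_eq_inner inner_diff inner_commute algebra_simps)
  moreover have "w^2 * (norm (q-p))\<^sup>2 \<le> w * (norm (q-p))\<^sup>2"
  proof -
    have "w^2 \<le> w" using assms by (simp add: power2_eq_square mult_left_le)
    then show ?thesis by (intro mult_right_mono) auto
  qed
  ultimately show ?thesis unfolding e by linarith
qed

lemma half_sq_diff:
  fixes b c :: "'a::real_inner"
  shows "(norm b)\<^sup>2 / 2 \<le> (norm c)\<^sup>2 / 2 + norm (b - c) * norm b"
proof -
  have "(norm c)\<^sup>2 = (norm b)\<^sup>2 - 2 * (b \<bullet> (b - c)) + (norm (b - c))\<^sup>2"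
    by (simp add: power2_norm_eq_inner inner_diff inner_commute algebra_simps)
  moreover have "b \<bullet> (b - c) \<le> norm (b - c) * norm b"
    using Cauchy_Schwarz_ineq2[of b "b - c"] by (simp add: mult.commute)
  moreover have "0 \<le> (norm (b - c))\<^sup>2" by simp
  ultimately show ?thesis by linarith
qed

lemma mv_scale:
  fixes M :: "real^'n^'m"
  shows "M *v (c *\<^sub>R v) = c *\<^sub>R (M *v v)"
  by (simp add: matrix_vector_mult_def vec_eq_iff sum_distrib_left algebra_simps)

lemma step_real:
  fixes y x y' :: "real^'n" and a b :: "real^'m" and M :: "real^'n^'m"
  assumes y': "y' = (1-w) *\<^sub>R y + w *\<^sub>R x" and w: "0 < w" "w \<le> 1"
  and cf: "fy' \<le> (1-w)*fy + w*fx"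
  and desc: "(norm (a + M *v (x - y)))\<^sup>2/2 + fx + \<beta>/2*(norm(x-y))\<^sup>2 \<le> (norm a)\<^sup>2/2 + fy"
  and tay: "norm (b - (a + M *v (y' - y))) \<le> C*(norm(y'-y))\<^sup>2"
  and bA: "norm b \<le> Am" and C: "C > 0" and w3: "2*C*Am*w \<le> \<beta> - \<epsilon>"
  shows "(norm b)\<^sup>2/2 + fy' \<le> (1-w)*((norm a)\<^sup>2/2 + fy) + w*((norm (a + M *v (x - y)))\<^sup>2/2 + fx) + C*Am*w\<^sup>2*(norm(x-y))\<^sup>2"
    and "(norm b)\<^sup>2/2 + fy' \<le> (norm a)\<^sup>2/2 + fy - w*\<epsilon>/2*(norm(x-y))\<^sup>2"
proof -
  define q where "q = a + M *v (x - y)"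
  define n where "n = norm (x - y)"
  have dy: "y' - y = w *\<^sub>R (x - y)" using y' by (simp add: algebra_simps)
  have ny: "norm (y' - y) = w * n" using dy w by (simp add: n_def)
  have c: "a + M *v (y' - y) = (1-w) *\<^sub>R a + w *\<^sub>R q"
    unfolding dy mv_scale q_def by (simp add: algebra_simps)
  have Am0: "0 \<le> Am" using bA norm_ge_zero order_trans by blast
  have h1: "(norm b)\<^sup>2/2 \<le> (norm (a + M *v (y' - y)))\<^sup>2/2 + norm (b - (a + M *v (y' - y))) * norm b"
    by (rule half_sq_diff)
  have h2: "norm (b - (a + M *v (y' - y))) * norm b \<le> (C*(w*n)\<^sup>2) * Am"
    using tay bA ny C by (intro mult_mono) auto
  have h2': "(C*(w*n)\<^sup>2) * Am = C*Am*w\<^sup>2*n\<^sup>2" by (simp add: algebra_simps power2_eq_square)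
  have h3: "(norm (a + M *v (y' - y)))\<^sup>2/2 \<le> (1-w) * (norm a)\<^sup>2/2 + w * (norm q)\<^sup>2/2"
    using norm2_convex[of w a q] w unfolding c by auto
  have e: "(1-w)*((norm a)\<^sup>2/2 + fy) + w*((norm q)\<^sup>2/2 + fx) = ((1-w) * (norm a)\<^sup>2/2 + w * (norm q)\<^sup>2/2) + ((1-w)*fy + w*fx)"
    by (simp add: algebra_simps)
  show 1: "(norm b)\<^sup>2/2 + fy' \<le> (1-w)*((norm a)\<^sup>2/2 + fy) + w*((norm (a + M *v (x - y)))\<^sup>2/2 + fx) + C*Am*w\<^sup>2*(norm(x-y))\<^sup>2"
    using h1 h2 h2' h3 cf e unfolding q_def[symmetric] n_def[symmetric] by linarith
  have d2: "w*((norm q)\<^sup>2/2 + fx) \<le> w*((norm a)\<^sup>2/2 + fy - \<beta>/2*n\<^sup>2)"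
    using desc w unfolding q_def[symmetric] n_def[symmetric] by (intro mult_left_mono) auto
  have d3: "(2*C*Am*w) * (w * n\<^sup>2) \<le> (\<beta> - \<epsilon>) * (w * n\<^sup>2)"
    using w3 w by (intro mult_right_mono) auto
  have e2: "(1-w)*((norm a)\<^sup>2/2 + fy) + w*((norm a)\<^sup>2/2 + fy - \<beta>/2*n\<^sup>2) = ((norm a)\<^sup>2/2 + fy) - (w*\<beta>*n\<^sup>2)/2"
    by (simp add: field_simps)
  have e3: "(2*C*Am*w) * (w * n\<^sup>2) = 2 * (C*Am*w\<^sup>2*n\<^sup>2)" by (simp add: algebra_simps power2_eq_square)
  have e4: "(\<beta> - \<epsilon>) * (w * n\<^sup>2) = w*\<beta>*n\<^sup>2 - 2*(w*\<epsilon>/2*n\<^sup>2)" by (simp add: algebra_simps)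
  show "(norm b)\<^sup>2/2 + fy' \<le> (norm a)\<^sup>2/2 + fy - w*\<epsilon>/2*(norm(x-y))\<^sup>2"
    using 1 d2 d3 e2 e3 e4 unfolding q_def[symmetric] n_def[symmetric] by linarith
qed

lemma norm_add_scale_sq:
  fixes p u :: "'a::real_inner"
  shows "(norm (p + w *\<^sub>R u))\<^sup>2 = (norm p)\<^sup>2 + 2*w*(p \<bullet> u) + w^2 * (norm u)\<^sup>2"
  by (simp only: power2_norm_eq_inner inner_add_left inner_add_right inner_scaleR_left inner_scaleR_right)
     (simp add: inner_commute algebra_simps power2_eq_square)

lemma stat:
  fixes f :: "real^'n \<Rightarrow> real" and M :: "real^'n^'m" and a :: "real^'m"
  assumes conv: "\<And>y t. y\<in>D \<Longrightarrow> 0<t \<Longrightarrow> t<1 \<Longrightarrow> (1-t) *\<^sub>R xh + t *\<^sub>R y \<in> D \<and> f ((1-t) *\<^sub>R xh + t *\<^sub>R y) \<le> (1-t)*f xh + t*f y"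
  and mn: "\<And>y. y \<in> D \<Longrightarrow> f xh + (norm a)\<^sup>2/2 \<le> f y + (norm (a + M *v (y-xh)))\<^sup>2/2 + \<beta>/2*(norm(y-xh))\<^sup>2"
  and y: "y \<in> D"
  shows "f xh \<le> f y + a \<bullet> (M *v (y - xh))"
proof -
  define h where "h = y - xh"
  define u where "u = M *v h"
  define K where "K = (norm u)\<^sup>2/2 + \<beta>/2*(norm h)\<^sup>2"
  have key: "f xh \<le> f y + a \<bullet> u + t*K" if t: "0<t" "t<1" for t
  proof -
    define p where "p = (1-t) *\<^sub>R xh + t *\<^sub>R y"
    have cp: "p \<in> D" "f p \<le> (1-t)*f xh + t*f y" using conv[OF y t] p_def by auto
    have ph: "p - xh = t *\<^sub>R h" by (simp add: p_def h_def algebra_simps)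
    have m1: "f xh + (norm a)\<^sup>2/2 \<le> f p + (norm (a + t *\<^sub>R u))\<^sup>2/2 + \<beta>/2*(norm(t *\<^sub>R h))\<^sup>2"
      using mn[OF cp(1)] unfolding ph mv_scale u_def .
    have m2: "(norm (a + t *\<^sub>R u))\<^sup>2/2 = (norm a)\<^sup>2/2 + t*(a \<bullet> u) + t^2 * ((norm u)\<^sup>2/2)"
      by (simp add: norm_add_scale_sq)
    have m3: "\<beta>/2*(norm(t *\<^sub>R h))\<^sup>2 = t^2 * (\<beta>/2*(norm h)\<^sup>2)"
      using t by (simp add: power_mult_distrib)
    have e: "t * (f y + a \<bullet> u + t*K) = t*f y + t*(a \<bullet> u) + t^2*((norm u)\<^sup>2/2) + t^2*(\<beta>/2*(norm h)\<^sup>2)"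
      by (simp add: K_def algebra_simps power2_eq_square)
    have e2: "(1-t)*f xh = f xh - t * f xh" by (simp add: algebra_simps)
    have "t * f xh \<le> t * (f y + a \<bullet> u + t*K)"
      using m1 m2 m3 cp(2) e e2 by linarith
    then show ?thesis using t by simp
  qed
  show ?thesis
  proof (rule ccontr)
    assume "\<not> ?thesis"
    then have dpos: "0 < f xh - (f y + a \<bullet> u)" unfolding u_def h_def by simp
    define \<delta> where "\<delta> = f xh - (f y + a \<bullet> u)"
    define t where "t = min (1/2) (\<delta> / (2*(\<bar>K\<bar>+1)))"
    have t: "0 < t" "t < 1" using dpos by (auto simp: t_def \<delta>_def)
    have "t * K \<le> t * \<bar>K\<bar>" using t by (simp add: mult_left_mono)
    also have "\<dots> \<le> (\<delta> / (2*(\<bar>K\<bar>+1))) * \<bar>K\<bar>" by (intro mult_right_mono) (auto simp: t_def)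
    also have "\<dots> < \<delta>"
      using dpos by (simp add: \<delta>_def[symmetric] field_simps add_nonneg_pos)
    finally have "t*K < \<delta>" .
    with key[OF t] show False by (simp add: \<delta>_def)
  qed
qed

lemma infdist_acc:
  fixes z :: "nat \<Rightarrow> 'a::heine_borel"
  assumes bd: "bounded (range z)" and acc: "\<And>x. acc_point z x \<Longrightarrow> x \<in> V"
  shows "(\<lambda>k. infdist (z k) V) \<longlonglongrightarrow> 0"
  unfolding LIMSEQ_iff
proof (rule ccontr)
  assume "\<not> (\<forall>r>0. \<exists>no. \<forall>n\<ge>no. norm (infdist (z n) V - 0) < r)"
  then obtain \<eta> where \<eta>0: "\<eta> > 0" and \<eta>1: "\<forall>no. \<exists>n\<ge>no. \<eta> \<le> \<bar>infdist (z n) V\<bar>"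
    by (auto simp: not_less)
  have \<eta>: "\<eta> > 0" "\<forall>no. \<exists>n\<ge>no. \<eta> \<le> infdist (z n) V" using \<eta>0 \<eta>1 by (simp_all add: abs_of_nonneg infdist_nonneg)
  define S where "S = {n. \<eta> \<le> infdist (z n) V}"
  have "infinite S" using \<eta>(2) by (simp add: S_def infinite_nat_iff_unbounded_le)
  then obtain s :: "nat \<Rightarrow> nat" where s: "strict_mono s" "\<And>n. s n \<in> S" using infinite_enumerate by blast
  have "bounded (range (z \<circ> s))" using bd by (rule bounded_subset) auto
  then obtain l r where lr: "strict_mono r" "((z \<circ> s) \<circ> r) \<longlonglongrightarrow> l"
    using bounded_imp_convergent_subsequence by blast
  have "acc_point z l" unfolding acc_point_def
    using lr s(1) by (intro exI[of _ "s \<circ> r"]) (auto simp: strict_mono_o o_assoc)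
  then have lV: "l \<in> V" by (rule acc)
  have "(\<lambda>j. dist (((z \<circ> s) \<circ> r) j) l) \<longlonglongrightarrow> 0" using lr(2) by (rule tendsto_dist_iff[THEN iffD1])
  from order_tendstoD(2)[OF this \<eta>(1)] obtain j where "dist (((z \<circ> s) \<circ> r) j) l < \<eta>"
    by (meson eventually_sequentially order_refl)
  moreover have "infdist (((z \<circ> s) \<circ> r) j) V \<le> dist (((z \<circ> s) \<circ> r) j) l" using lV by (rule infdist_le)
  moreover have "\<eta> \<le> infdist (((z \<circ> s) \<circ> r) j) V" using s(2)[of "r j"] by (simp add: S_def)
  ultimately show False by linarith
qed

lemma sep_aux:
  fixes z :: "nat \<Rightarrow> 'a::metric_space"
  assumes sum: "\<And>x. \<delta> \<le> infdist x P + infdist x Q"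
  and N: "\<And>k. k \<ge> N \<Longrightarrow> min (infdist (z k) P) (infdist (z k) Q) < \<delta>/3 \<and> dist (z (Suc k)) (z k) < \<delta>/3"
  and start: "infdist (z N) P < \<delta>/3"
  and eqm: "\<And>k. infdist (z k) (P\<union>Q) = min (infdist (z k) P) (infdist (z k) Q)"
  and lim: "(\<lambda>k. infdist (z k) (P \<union> Q)) \<longlonglongrightarrow> 0"
  shows "(\<lambda>k. infdist (z k) P) \<longlonglongrightarrow> 0"
proof -
  have all: "infdist (z k) P < \<delta>/3" if "k \<ge> N" for k
    using that
  proof (induction k rule: dec_induct)
    case base then show ?case by (rule start)
  next
    case (step k)
    have "infdist (z (Suc k)) P \<le> infdist (z k) P + dist (z (Suc k)) (z k)" by (rule infdist_triangle)
    then have "infdist (z (Suc k)) P < 2*\<delta>/3" using step N[of k] by auto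
    then have "infdist (z (Suc k)) Q > \<delta>/3" using sum[of "z (Suc k)"] by linarith
    then show ?case using N[of "Suc k"] step by (auto simp: min_def split: if_splits)
  qed
  have "eventually (\<lambda>k. infdist (z k) (P \<union> Q) = infdist (z k) P) sequentially"
    unfolding eventually_sequentially
  proof (intro exI allI impI)
    fix k assume k: "k \<ge> N"
    then have "infdist (z k) Q > \<delta>/3" using all[OF k] sum[of "z k"] infdist_nonneg[of "z k" P] by linarith
    then show "infdist (z k) (P \<union> Q) = infdist (z k) P" using all[OF k] eqm[of k] by auto
  qed
  from tendsto_cong[OF this, THEN iffD1, OF lim] show ?thesis .
qed

lemma infdist_sum:
  fixes P Q :: "'a::heine_borel set"
  assumes "closed P" "closed Q" "P \<noteq> {}" "Q \<noteq> {}" "\<forall>x\<in>P. \<forall>y\<in>Q. \<delta> \<le> dist x y"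
  shows "\<delta> \<le> infdist x P + infdist x Q"
proof -
  obtain p where p: "p \<in> P" "infdist x P = dist x p" using infdist_attains_inf[OF assms(1,3)] by blast
  obtain q where q: "q \<in> Q" "infdist x Q = dist x q" using infdist_attains_inf[OF assms(2,4)] by blast
  have "\<delta> \<le> dist p q" using assms(5) p q by auto
  also have "\<dots> \<le> dist x p + dist x q" by (rule dist_triangle3)
  finally show ?thesis using p q by simp
qed

lemma sep:
  fixes z :: "nat \<Rightarrow> 'a::heine_borel"
  assumes lim: "(\<lambda>k. infdist (z k) (U1 \<union> U2)) \<longlonglongrightarrow> 0" and step: "(\<lambda>k. dist (z (Suc k)) (z k)) \<longlonglongrightarrow> 0"
  and c: "closed U1" "closed U2" and dj: "U1 \<inter> U2 = {}" and bd: "bounded (U1 \<union> U2)" and ne: "U1 \<noteq> {}" "U2 \<noteq> {}"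
  shows "\<exists>U\<in>{U1,U2}. (\<lambda>k. infdist (z k) U) \<longlonglongrightarrow> 0"
proof -
  have "compact U1" using bd c by (auto simp: compact_eq_bounded_closed intro: bounded_subset)
  then obtain \<delta> where \<delta>: "\<delta> > 0" "\<forall>x\<in>U1. \<forall>y\<in>U2. \<delta> \<le> dist x y"
    using separate_compact_closed[OF _ c(2) dj] by blast
  have sum1: "\<delta> \<le> infdist x U1 + infdist x U2" for x using infdist_sum[OF c ne \<delta>(2)] .
  have sum2: "\<delta> \<le> infdist x U2 + infdist x U1" for x using sum1[of x] by linarith
  have eqm1: "infdist (z k) (U1\<union>U2) = min (infdist (z k) U1) (infdist (z k) U2)" for k
    using infdist_Un_min[OF ne] .
  have eqm2: "infdist (z k) (U2\<union>U1) = min (infdist (z k) U2) (infdist (z k) U1)" for k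
    using eqm1[of k] by (simp add: Un_commute min.commute)
  have ev1: "eventually (\<lambda>k. infdist (z k) (U1 \<union> U2) < \<delta>/3) sequentially"
    using lim \<delta>(1) by (intro order_tendstoD) auto
  have ev2: "eventually (\<lambda>k. dist (z (Suc k)) (z k) < \<delta>/3) sequentially"
    using step \<delta>(1) by (intro order_tendstoD) auto
  from eventually_conj[OF ev1 ev2] obtain N where
    N: "\<And>k. k \<ge> N \<Longrightarrow> infdist (z k) (U1 \<union> U2) < \<delta>/3 \<and> dist (z (Suc k)) (z k) < \<delta>/3"
    unfolding eventually_sequentially by blast
  have N1: "\<And>k. k \<ge> N \<Longrightarrow> min (infdist (z k) U1) (infdist (z k) U2) < \<delta>/3 \<and> dist (z (Suc k)) (z k) < \<delta>/3"
    using N eqm1 by metis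
  have N2: "\<And>k. k \<ge> N \<Longrightarrow> min (infdist (z k) U2) (infdist (z k) U1) < \<delta>/3 \<and> dist (z (Suc k)) (z k) < \<delta>/3"
    using N1 by (simp add: min.commute)
  show ?thesis
  proof (cases "infdist (z N) U1 < \<delta>/3")
    case True
    have "(\<lambda>k. infdist (z k) U1) \<longlonglongrightarrow> 0"
      by (rule sep_aux[OF sum1 N1 True eqm1 lim])
    then show ?thesis by auto
  next
    case False
    then have st: "infdist (z N) U2 < \<delta>/3" using N1[of N] by (auto simp: min_def split: if_splits)
    have lim2: "(\<lambda>k. infdist (z k) (U2 \<union> U1)) \<longlonglongrightarrow> 0" using lim by (simp add: Un_commute)
    have "(\<lambda>k. infdist (z k) U2) \<longlonglongrightarrow> 0"
      by (rule sep_aux[OF sum2 N2 st eqm2 lim2])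
    then show ?thesis by auto
  qed
qed

theorem theorem2p1:
  fixes F :: "real^'n \<Rightarrow> ereal"
    and A :: "real^'n \<Rightarrow> real^'m"
    and Jac :: "real^'n \<Rightarrow> real^'n^'m"
    and z0 :: "real^'n"
    and d C \<beta> \<epsilon> w :: real
    and z xt e :: "nat \<Rightarrow> real^'n"
  assumes F_convex: "econvex F" and F_proper: "proper_fun F" and F_lsc: "elsc F"
    and A_deriv: "\<And>y. y \<in> edom F \<Longrightarrow> (A has_derivative (\<lambda>h. Jac y *v h)) (at y within edom F)"
    and Jac_cont: "continuous_on (edom F) Jac"
    and z0_dom: "z0 \<in> edom F"
    and lev_bounded: "bounded {x. Jfun A F x \<le> Jfun A F z0}"
    and inf_F: "(INF x. F x) > -\<infinity>"
    and A_bdd: "bdd_above ((\<lambda>x. norm (A x)) ` edom F)"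
    and d_pos: "d > 0" and C_pos: "C > 0"
    and taylor: "\<And>y x. Jfun A F y \<le> Jfun A F z0 \<Longrightarrow> x \<in> edom F \<Longrightarrow> dist x y \<le> d \<Longrightarrow>
                   norm (A x - linA A Jac y x) \<le> C * (norm (x - y))\<^sup>2"
    and \<beta>_pos: "\<beta> > 0" and \<epsilon>_pos: "0 < \<epsilon>" and \<epsilon>_less: "\<epsilon> < \<beta>"
    and w_pos: "0 < w" and w_le1: "w \<le> 1"
    and w_le2: "Jfun A F z0 > (INF x. F x) \<Longrightarrow>
        w \<le> d / sqrt (2 / \<beta> * real_of_ereal (Jfun A F z0 - (INF x. F x)))"
    and w_le3: "2 * C * (SUP x\<in>edom F. norm (A x)) * w \<le> \<beta> - \<epsilon>"
    and z_0: "z 0 = z0"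
    and z_Suc: "\<And>k. z (Suc k) = (1 - w) *\<^sub>R z k + w *\<^sub>R xt k"
    and e_sub: "\<And>k. e k \<in> subdiff (\<lambda>x. Jfun (linA A Jac (z k)) F x + ereal (\<beta> / 2 * (norm (x - z k))\<^sup>2)) (xt k)"
    and e_lim: "e \<longlonglongrightarrow> 0"
    and descent: "\<And>k. (let Jt = (\<lambda>x. Jfun (linA A Jac (z k)) F x + ereal (\<beta> / 2 * (norm (x - z k))\<^sup>2))
                      in (Jt (z k) \<ge> Jt (xt k) \<and> xt k \<noteq> z k) \<or> (xt k = z k \<and> 0 \<in> subdiff Jt (z k)))"
  shows "decseq (\<lambda>k. Jfun A F (z k)) \<and>
    (\<exists>L::real. ((\<lambda>k. Jfun A F (z k)) \<longlonglongrightarrow> ereal L)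
      \<and> (\<forall>xh. acc_point z xh \<longrightarrow> 0 \<in> clarke_subdiff A Jac F xh \<and> Jfun A F xh = ereal L)
      \<and> (\<forall>U1 U2. closed U1 \<and> closed U2 \<and> U1 \<inter> U2 = {} \<and>
           {xh \<in> edom F. 0 \<in> clarke_subdiff A Jac F xh \<and> Jfun A F xh = ereal L} = U1 \<union> U2 \<longrightarrow>
           (\<exists>U \<in> {U1, U2}. (\<forall>xh. acc_point z xh \<longrightarrow> xh \<in> U) \<and> ((\<lambda>k. infdist (z k) U) \<longlonglongrightarrow> 0))))"
proof -
  define D where "D = edom F"
  define f where "f = (\<lambda>x. real_of_ereal (F x))"
  have Fnm: "F x \<noteq> -\<infinity>" for x using F_proper by (auto simp: proper_fun_def)
  have FD: "F x = ereal (f x)" if "x \<in> D" for x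
    using that Fnm[of x] by (cases "F x") (auto simp: D_def edom_def f_def)
  have notD: "F x = \<infinity>" if "x \<notin> D" for x
    using that by (auto simp: D_def edom_def)
  have z0D: "z0 \<in> D" using z0_dom by (simp add: D_def)
  have INF_le: "(INF x. F x) \<le> F x" for x by (rule INF_lower) auto
  have "(INF x. F x) \<noteq> \<infinity>" using INF_le[of z0] FD[OF z0D] by auto
  then obtain m where INFm: "(INF x. F x) = ereal m" using inf_F by (cases "INF x. F x") auto
  have Fm: "m \<le> f x" if "x \<in> D" for x using INF_le[of x] FD[OF that] INFm by simp
  define jr where "jr x = (norm (A x))\<^sup>2/2 + f x" for x
  have JD: "Jfun A F x = ereal (jr x)" if "x \<in> D" for x
    using FD[OF that] by (simp add: Jfun_def jr_def)
  have jrm: "m \<le> jr x" if "x \<in> D" for x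
  proof -
    have "0 \<le> (norm (A x))\<^sup>2/2" by simp
    then show ?thesis using Fm[OF that] unfolding jr_def by linarith
  qed
  define J0 where "J0 = jr z0"
  define Am where "Am = (SUP x\<in>D. norm (A x))"
  have AmA: "norm (A x) \<le> Am" if "x \<in> D" for x
    unfolding Am_def using A_bdd that by (intro cSUP_upper) (auto simp: D_def)
  define Jt where "Jt k = (\<lambda>x. Jfun (linA A Jac (z k)) F x + ereal (\<beta> / 2 * (norm (x - z k))\<^sup>2))" for k
  have JtD: "Jt k x = ereal ((norm (linA A Jac (z k) x))\<^sup>2/2 + f x + \<beta>/2*(norm(x - z k))\<^sup>2)" if "x \<in> D" for k x
    using FD[OF that] by (simp add: Jt_def Jfun_def)
  have Jtz: "Jt k (z k) = ereal (jr (z k))" if "z k \<in> D" for k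
    using JtD[OF that, of k] by (simp add: jr_def linA_def)
  have desc: "Jt k (xt k) \<le> Jt k (z k)" for k
    using descent[of k] unfolding Jt_def[symmetric] Let_def by auto
  have e_sub': "e k \<in> subdiff (Jt k) (xt k)" for k using e_sub[of k] by (simp add: Jt_def)
  have xtD: "xt k \<in> D" for k
  proof (rule ccontr)
    assume "xt k \<notin> D"
    then have "Jt k (xt k) = \<infinity>" using notD by (simp add: Jt_def Jfun_def)
    then show False using e_sub'[of k] by (simp add: subdiff_def)
  qed
  have subg: "(norm (linA A Jac (z k) (xt k)))\<^sup>2/2 + f (xt k) + \<beta>/2*(norm(xt k - z k))\<^sup>2 + e k \<bullet> (y - xt k)
      \<le> (norm (linA A Jac (z k) y))\<^sup>2/2 + f y + \<beta>/2*(norm(y - z k))\<^sup>2" if "y \<in> D" for k y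
  proof -
    have "Jt k (xt k) + ereal (e k \<bullet> (y - xt k)) \<le> Jt k y" using e_sub'[of k] by (simp add: subdiff_def)
    then show ?thesis using JtD[OF that, of k] JtD[OF xtD, of k] by simp
  qed
  have J0m: "m \<le> J0" using jrm[OF z0D] by (simp add: J0_def)
  have stepk: "z (Suc k) \<in> D \<and> jr (z (Suc k)) \<le> (1-w)*jr (z k) + w*((norm (linA A Jac (z k) (xt k)))\<^sup>2/2 + f (xt k)) + C*Am*w\<^sup>2*(norm (xt k - z k))\<^sup>2
       \<and> jr (z (Suc k)) \<le> jr (z k) - w*\<epsilon>/2*(norm (xt k - z k))\<^sup>2"
    if zk: "z k \<in> D" "jr (z k) \<le> J0" for k
  proof -
    define n where "n = norm (xt k - z k)"
    have dr: "(norm (linA A Jac (z k) (xt k)))\<^sup>2/2 + f (xt k) + \<beta>/2*n\<^sup>2 \<le> jr (z k)"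
      using desc[of k] JtD[OF xtD, of k] Jtz[OF zk(1)] by (simp add: n_def)
    have bn: "\<beta>/2*n\<^sup>2 \<le> J0 - m"
      using dr zk(2) Fm[OF xtD[of k]] by (smt (verit) zero_le_power2 divide_nonneg_pos)
    have dz: "z (Suc k) - z k = w *\<^sub>R (xt k - z k)" by (simp add: z_Suc algebra_simps)
    have nz: "norm (z (Suc k) - z k) = w * n" using dz w_pos by (simp add: n_def)
    have dist_d: "dist (z (Suc k)) (z k) \<le> d"
    proof (cases "J0 > m")
      case True
      have "Jfun A F z0 > (INF x. F x)" using True JD[OF z0D] INFm by (simp add: J0_def)
      then have w2: "w \<le> d / sqrt (2 / \<beta> * (J0 - m))" using w_le2 JD[OF z0D] INFm by (simp add: J0_def)
      have Spos: "sqrt (2 / \<beta> * (J0 - m)) > 0" using True \<beta>_pos by simp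
      have "n\<^sup>2 \<le> 2 / \<beta> * (J0 - m)" using bn \<beta>_pos by (simp add: field_simps)
      then have "n \<le> sqrt (2 / \<beta> * (J0 - m))" by (rule real_le_rsqrt)
      then have "w * n \<le> w * sqrt (2 / \<beta> * (J0 - m))" using w_pos by simp
      also have "\<dots> \<le> d" using w2 Spos by (simp add: pos_le_divide_eq)
      finally show ?thesis using nz by (simp add: dist_norm)
    next
      case False
      then have "n\<^sup>2 \<le> 0" using bn J0m \<beta>_pos by (smt (verit) divide_pos_pos mult_pos_pos zero_less_power2 power2_less_0)
      then have "n = 0" by simp
      then show ?thesis using nz d_pos by (simp add: dist_norm)
    qed
    obtain c where c: "F ((1-w) *\<^sub>R z k + w *\<^sub>R xt k) = ereal c" "c \<le> (1-w)*f (z k) + w*f (xt k)"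
      using econv_dom[OF F_convex _ FD[OF zk(1)] FD[OF xtD[of k]], of w] Fnm w_pos w_le1 by auto
    have zSD: "z (Suc k) \<in> D" using c(1) by (simp add: z_Suc D_def edom_def)
    have fzS: "f (z (Suc k)) = c" using c(1) by (simp add: z_Suc f_def)
    have JzJ0: "Jfun A F (z k) \<le> Jfun A F z0" using JD[OF zk(1)] JD[OF z0D] zk(2) by (simp add: J0_def)
    have tay: "norm (A (z (Suc k)) - linA A Jac (z k) (z (Suc k))) \<le> C * (norm (z (Suc k) - z k))\<^sup>2"
      using taylor[OF JzJ0 zSD[unfolded D_def]] dist_d by (simp add: dist_commute)
    note sr = step_real[of "z (Suc k)" w "z k" "xt k" "f (z (Suc k))" "f (z k)" "f (xt k)" "A (z k)" "Jac (z k)" \<beta>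
        "A (z (Suc k))" C Am \<epsilon>]
    have prem1: "(norm (A (z k) + Jac (z k) *v (xt k - z k)))\<^sup>2 / 2 + f (xt k) + \<beta> / 2 * (norm (xt k - z k))\<^sup>2 \<le> (norm (A (z k)))\<^sup>2 / 2 + f (z k)"
      using dr by (simp add: linA_def jr_def n_def)
    have prem2: "norm (A (z (Suc k)) - (A (z k) + Jac (z k) *v (z (Suc k) - z k))) \<le> C * (norm (z (Suc k) - z k))\<^sup>2"
      using tay by (simp add: linA_def)
    have s1: "(norm (A (z (Suc k))))\<^sup>2 / 2 + f (z (Suc k)) \<le> (1 - w) * ((norm (A (z k)))\<^sup>2 / 2 + f (z k)) +
        w * ((norm (A (z k) + Jac (z k) *v (xt k - z k)))\<^sup>2 / 2 + f (xt k)) + C * Am * w\<^sup>2 * (norm (xt k - z k))\<^sup>2"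
      and s2: "(norm (A (z (Suc k))))\<^sup>2 / 2 + f (z (Suc k)) \<le> (norm (A (z k)))\<^sup>2 / 2 + f (z k) - w * \<epsilon> / 2 * (norm (xt k - z k))\<^sup>2"
      using sr[OF z_Suc w_pos w_le1 _ prem1 prem2 AmA[OF zSD] C_pos] fzS c(2) w_le3 by (auto simp: Am_def D_def)
    show ?thesis using zSD s1 s2 by (simp add: jr_def linA_def)
  qed
  have inv: "z k \<in> D \<and> jr (z k) \<le> J0" for k
  proof (induction k)
    case 0 then show ?case using z0D by (simp add: z_0 J0_def)
  next
    case (Suc k)
    have "0 \<le> w*\<epsilon>/2*(norm (xt k - z k))\<^sup>2" using w_pos \<epsilon>_pos by simp
    then show ?case using stepk[of k] Suc by auto
  qed
  have zD: "z k \<in> D" for k using inv by blast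
  have jrJ0: "jr (z k) \<le> J0" for k using inv by blast
  have dec: "jr (z (Suc k)) \<le> jr (z k) - w*\<epsilon>/2*(norm (xt k - z k))\<^sup>2" for k using stepk[OF zD jrJ0] by blast
  have inter: "jr (z (Suc k)) \<le> (1-w)*jr (z k) + w*((norm (linA A Jac (z k) (xt k)))\<^sup>2/2 + f (xt k)) + C*Am*w\<^sup>2*(norm (xt k - z k))\<^sup>2" for k
    using stepk[OF zD jrJ0] by blast
  have decr: "jr (z (Suc k)) \<le> jr (z k)" for k
    using dec[of k] w_pos \<epsilon>_pos by (smt (verit) mult_nonneg_nonneg zero_le_power2 divide_nonneg_pos)
  have decjr: "decseq (\<lambda>k. jr (z k))" using decr by (simp add: decseq_Suc_iff)
  have part1: "decseq (\<lambda>k. Jfun A F (z k))" using decr by (simp add: decseq_Suc_iff JD[OF zD])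
  obtain L where L: "(\<lambda>k. jr (z k)) \<longlonglongrightarrow> L" "\<And>i. L \<le> jr (z i)"
    using decseq_convergent[OF decjr, of m] jrm[OF zD] by blast
  have LJ: "(\<lambda>k. Jfun A F (z k)) \<longlonglongrightarrow> ereal L" using L(1) by (simp add: JD[OF zD])
  have L1: "(\<lambda>k. jr (z (Suc k))) \<longlonglongrightarrow> L" using L(1) by (rule LIMSEQ_Suc)
  have nsq: "(\<lambda>k. (norm (xt k - z k))\<^sup>2) \<longlonglongrightarrow> 0"
  proof (rule tendsto_sandwich[of "\<lambda>_. 0" _ _ "\<lambda>k. (jr (z k) - jr (z (Suc k))) * (2/(w*\<epsilon>))"])
    show "\<forall>\<^sub>F n in sequentially. 0 \<le> (norm (xt n - z n))\<^sup>2" by simp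
    show "\<forall>\<^sub>F n in sequentially. (norm (xt n - z n))\<^sup>2 \<le> (jr (z n) - jr (z (Suc n))) * (2 / (w * \<epsilon>))"
    proof (intro always_eventually allI)
      fix k
      have "w*\<epsilon>/2*(norm (xt k - z k))\<^sup>2 \<le> jr (z k) - jr (z (Suc k))" using dec[of k] by simp
      then show "(norm (xt k - z k))\<^sup>2 \<le> (jr (z k) - jr (z (Suc k))) * (2 / (w * \<epsilon>))"
        using w_pos \<epsilon>_pos by (simp add: field_simps)
    qed
    show "(\<lambda>_. 0) \<longlonglongrightarrow> (0::real)" by simp
    have "(\<lambda>k. (jr (z k) - jr (z (Suc k))) * (2/(w*\<epsilon>))) \<longlonglongrightarrow> (L - L) * (2/(w*\<epsilon>))"
      by (intro tendsto_intros L(1) L1)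
    then show "(\<lambda>k. (jr (z k) - jr (z (Suc k))) * (2/(w*\<epsilon>))) \<longlonglongrightarrow> 0" by simp
  qed
  have nn: "(\<lambda>k. norm (xt k - z k)) \<longlonglongrightarrow> 0"
    using tendsto_real_sqrt[OF nsq] by simp
  have dxz: "(\<lambda>k. xt k - z k) \<longlonglongrightarrow> 0" using nn by (simp add: tendsto_norm_zero_iff)
  have stp: "(\<lambda>k. dist (z (Suc k)) (z k)) \<longlonglongrightarrow> 0"
  proof -
    have "dist (z (Suc k)) (z k) = w * norm (xt k - z k)" for k
      using w_pos by (simp add: dist_norm z_Suc algebra_simps flip: scaleR_diff_right)
    moreover have "(\<lambda>k. w * norm (xt k - z k)) \<longlonglongrightarrow> w * 0" by (intro tendsto_intros nn)
    ultimately show ?thesis by simp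
  qed
  have acc: "xh \<in> D \<and> 0 \<in> clarke_subdiff A Jac F xh \<and> Jfun A F xh = ereal L" if accp: "acc_point z xh" for xh
  proof -
    obtain r where r: "strict_mono r" "(z \<circ> r) \<longlonglongrightarrow> xh" using accp by (auto simp: acc_point_def)
    have zr: "(\<lambda>j. z (r j)) \<longlonglongrightarrow> xh" using r(2) by (simp add: o_def)
    have nr: "(\<lambda>j. xt (r j) - z (r j)) \<longlonglongrightarrow> 0"
      using LIMSEQ_subseq_LIMSEQ[OF dxz r(1)] by (simp add: o_def)
    have xtr: "(\<lambda>j. xt (r j)) \<longlonglongrightarrow> xh"
    proof -
      have "(\<lambda>j. z (r j) + (xt (r j) - z (r j))) \<longlonglongrightarrow> xh + 0" by (intro tendsto_intros zr nr)
      then show ?thesis by simp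
    qed
    have jr_r: "(\<lambda>j. jr (z (r j))) \<longlonglongrightarrow> L" using LIMSEQ_subseq_LIMSEQ[OF L(1) r(1)] by (simp add: o_def)
    have jr_r1: "(\<lambda>j. jr (z (Suc (r j)))) \<longlonglongrightarrow> L" using LIMSEQ_subseq_LIMSEQ[OF L1 r(1)] by (simp add: o_def)
    have er: "(\<lambda>j. e (r j)) \<longlonglongrightarrow> 0" using LIMSEQ_subseq_LIMSEQ[OF e_lim r(1)] by (simp add: o_def)
    have fJ0: "F (z (r j)) \<le> ereal J0" for j
    proof -
      have "0 \<le> (norm (A (z (r j))))\<^sup>2/2" by simp
      then have "f (z (r j)) \<le> J0" using jrJ0[of "r j"] unfolding jr_def by linarith
      then show ?thesis using FD[OF zD] by simp
    qed
    have "F xh \<le> ereal J0" by (rule lsc_real[OF F_lsc zr tendsto_const fJ0])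
    then have xhD: "xh \<in> D" by (auto simp: D_def edom_def)
    have contA: "continuous (at xh within D) A"
      using A_deriv[of xh] xhD by (auto simp: D_def intro: has_derivative_continuous)
    have Ar: "(\<lambda>j. A (z (r j))) \<longlonglongrightarrow> A xh"
      using contA zr zD unfolding continuous_within_sequentially by (auto simp: o_def)
    have Jr: "(\<lambda>j. Jac (z (r j))) \<longlonglongrightarrow> Jac xh"
      using Jac_cont zr zD xhD unfolding continuous_on_sequentially by (auto simp: o_def D_def)
    have lin_lim: "(\<lambda>j. linA A Jac (z (r j)) (X j)) \<longlonglongrightarrow> A xh + Jac xh *v (y - xh)" if "X \<longlonglongrightarrow> y" for X y
      unfolding linA_def by (intro tendsto_intros Ar tendsto_mv Jr that zr)
    have mn: "f xh + (norm (A xh))\<^sup>2/2 \<le> f y + (norm (A xh + Jac xh *v (y - xh)))\<^sup>2/2 + \<beta>/2*(norm(y-xh))\<^sup>2"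
      if yD: "y \<in> D" for y
    proof -
      define g where "g j = (norm (linA A Jac (z (r j)) y))\<^sup>2/2 + f y + \<beta>/2*(norm(y - z (r j)))\<^sup>2
          - (norm (linA A Jac (z (r j)) (xt (r j))))\<^sup>2/2 - \<beta>/2*(norm(xt (r j) - z (r j)))\<^sup>2 - e (r j) \<bullet> (y - xt (r j))" for j
      have gl: "g \<longlonglongrightarrow> (norm (A xh + Jac xh *v (y - xh)))\<^sup>2/2 + f y + \<beta>/2*(norm(y - xh))\<^sup>2
          - (norm (A xh + Jac xh *v (xh - xh)))\<^sup>2/2 - \<beta>/2*(norm(xh - xh))\<^sup>2 - 0 \<bullet> (y - xh)"
        unfolding g_def by (intro tendsto_intros lin_lim tendsto_const zr xtr er) simp_all
      have gb: "F (xt (r j)) \<le> ereal (g j)" for j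
        using subg[OF yD, of "r j"] FD[OF xtD[of "r j"]] by (simp add: g_def)
      have "F xh \<le> ereal ((norm (A xh + Jac xh *v (y - xh)))\<^sup>2/2 + f y + \<beta>/2*(norm(y - xh))\<^sup>2
          - (norm (A xh + Jac xh *v (xh - xh)))\<^sup>2/2 - \<beta>/2*(norm(xh - xh))\<^sup>2 - 0 \<bullet> (y - xh))"
        by (rule lsc_real[OF F_lsc xtr gl gb])
      then show ?thesis using FD[OF xhD] by simp
    qed
    have conv: "(1-t) *\<^sub>R xh + t *\<^sub>R y \<in> D \<and> f ((1-t) *\<^sub>R xh + t *\<^sub>R y) \<le> (1-t)*f xh + t*f y"
      if yt: "y \<in> D" "0 < t" "t < 1" for y t
    proof -
      obtain c where c: "F ((1-t) *\<^sub>R xh + t *\<^sub>R y) = ereal c" "c \<le> (1-t)*f xh + t*f y"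
        using econv_dom[OF F_convex _ FD[OF xhD] FD[OF yt(1)], of t] Fnm yt by auto
      then show ?thesis by (simp add: D_def edom_def f_def)
    qed
    have st: "f xh \<le> f y + A xh \<bullet> (Jac xh *v (y - xh))" if "y \<in> D" for y
      by (rule stat[OF conv mn that])
    define g where "g = - (transpose (Jac xh) *v A xh)"
    have gsub: "g \<in> subdiff F xh"
      unfolding subdiff_def
    proof (intro CollectI conjI allI)
      show "F xh < \<infinity>" using FD[OF xhD] by simp
      fix y
      show "F xh + ereal (g \<bullet> (y - xh)) \<le> F y"
      proof (cases "y \<in> D")
        case True
        then show ?thesis using st[OF True] FD[OF xhD] FD[OF True]
          by (simp add: g_def dot_transpose dot_lmul_matrix)
      next
        case False
        then show ?thesis using notD by simp
      qed
    qed
    have cl: "0 \<in> clarke_subdiff A Jac F xh"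
      unfolding clarke_subdiff_def using gsub by (intro CollectI exI[of _ g]) (simp add: g_def)
    have up: "F xh \<le> ereal (L - (norm (A xh))\<^sup>2/2)"
    proof (rule lsc_real[OF F_lsc zr])
      show "(\<lambda>j. jr (z (r j)) - (norm (A (z (r j))))\<^sup>2/2) \<longlonglongrightarrow> L - (norm (A xh))\<^sup>2/2"
        by (intro tendsto_intros jr_r Ar) simp_all
      show "F (z (r j)) \<le> ereal (jr (z (r j)) - (norm (A (z (r j))))\<^sup>2/2)" for j
        using FD[OF zD[of "r j"]] by (simp add: jr_def)
    qed
    then have up': "jr xh \<le> L" using FD[OF xhD] by (simp add: jr_def)
    define h where "h j = (1-w)*jr (z (r j)) + w*((norm (linA A Jac (z (r j)) xh))\<^sup>2/2 + f xh + \<beta>/2*(norm(xh - z (r j)))\<^sup>2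
        - \<beta>/2*(norm(xt (r j) - z (r j)))\<^sup>2 - e (r j) \<bullet> (xh - xt (r j))) + C*Am*w\<^sup>2*(norm (xt (r j) - z (r j)))\<^sup>2" for j
    have hb: "jr (z (Suc (r j))) \<le> h j" for j
    proof -
      have "w*((norm (linA A Jac (z (r j)) (xt (r j))))\<^sup>2/2 + f (xt (r j))) \<le>
          w*((norm (linA A Jac (z (r j)) xh))\<^sup>2/2 + f xh + \<beta>/2*(norm(xh - z (r j)))\<^sup>2
        - \<beta>/2*(norm(xt (r j) - z (r j)))\<^sup>2 - e (r j) \<bullet> (xh - xt (r j)))"
        using subg[OF xhD, of "r j"] w_pos by (intro mult_left_mono) auto
      then show ?thesis using inter[of "r j"] unfolding h_def by linarith
    qed
    have hl: "h \<longlonglongrightarrow> (1-w)*L + w*((norm (A xh + Jac xh *v (xh - xh)))\<^sup>2/2 + f xh + \<beta>/2*(norm(xh - xh))\<^sup>2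
        - \<beta>/2*(norm (0::real^'n))\<^sup>2 - 0 \<bullet> (xh - xh)) + C*Am*w\<^sup>2*(norm (0::real^'n))\<^sup>2"
      unfolding h_def by (intro tendsto_intros jr_r lin_lim tendsto_const zr xtr er nr) simp_all
    have "L \<le> (1-w)*L + w*((norm (A xh + Jac xh *v (xh - xh)))\<^sup>2/2 + f xh + \<beta>/2*(norm(xh - xh))\<^sup>2
        - \<beta>/2*(norm (0::real^'n))\<^sup>2 - 0 \<bullet> (xh - xh)) + C*Am*w\<^sup>2*(norm (0::real^'n))\<^sup>2"
      by (rule LIMSEQ_le[OF jr_r1 hl]) (auto intro: hb)
    then have "w * L \<le> w * jr xh" by (simp add: jr_def algebra_simps)
    then have "L \<le> jr xh" using w_pos by simp
    with up' have "jr xh = L" by simp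
    then show ?thesis using xhD cl JD[OF xhD] by simp
  qed
  have part3: "\<exists>U \<in> {U1, U2}. (\<forall>xh. acc_point z xh \<longrightarrow> xh \<in> U) \<and> ((\<lambda>k. infdist (z k) U) \<longlonglongrightarrow> 0)"
    if U: "closed U1" "closed U2" "U1 \<inter> U2 = {}"
      "{xh \<in> edom F. 0 \<in> clarke_subdiff A Jac F xh \<and> Jfun A F xh = ereal L} = U1 \<union> U2" for U1 U2
  proof -
    have accU: "xh \<in> U1 \<union> U2" if "acc_point z xh" for xh
      using acc[OF that] U(4)[symmetric] by (auto simp: D_def)
    have LJ0: "L \<le> J0" using L(2)[of 0] by (simp add: z_0 J0_def)
    have "U1 \<union> U2 \<subseteq> {x. Jfun A F x \<le> Jfun A F z0}"
      using U(4)[symmetric] LJ0 JD[OF z0D] by (auto simp: J0_def)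
    then have bdU: "bounded (U1 \<union> U2)" using lev_bounded by (rule bounded_subset[rotated])
    have "range z \<subseteq> {x. Jfun A F x \<le> Jfun A F z0}"
      using JD[OF zD] JD[OF z0D] jrJ0 by (auto simp: J0_def)
    then have bdz: "bounded (range z)" using lev_bounded by (rule bounded_subset[rotated])
    have limV: "(\<lambda>k. infdist (z k) (U1 \<union> U2)) \<longlonglongrightarrow> 0" by (rule infdist_acc[OF bdz accU])
    show ?thesis
    proof (cases "U1 = {}")
      case True
      then show ?thesis using limV accU by auto
    next
      case ne1: False
      show ?thesis
      proof (cases "U2 = {}")
        case True
        then show ?thesis using limV accU by auto
      next
        case ne2: False
        obtain U where UU: "U \<in> {U1, U2}" "(\<lambda>k. infdist (z k) U) \<longlonglongrightarrow> 0"
          using sep[OF limV stp U(1,2,3) bdU ne1 ne2] by blast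
        have cU: "closed U" "U \<noteq> {}" using UU(1) U ne1 ne2 by auto
        have "xh \<in> U" if accp: "acc_point z xh" for xh
        proof -
          obtain r where r: "strict_mono r" "(z \<circ> r) \<longlonglongrightarrow> xh" using accp by (auto simp: acc_point_def)
          have a1: "(\<lambda>j. infdist ((z \<circ> r) j) U) \<longlonglongrightarrow> infdist xh U" by (rule tendsto_infdist[OF r(2)])
          have a2: "(\<lambda>j. infdist ((z \<circ> r) j) U) \<longlonglongrightarrow> 0"
            using LIMSEQ_subseq_LIMSEQ[OF UU(2) r(1)] by (simp add: o_def)
          have "infdist xh U = 0" using LIMSEQ_unique[OF a1 a2] .
          then show ?thesis using in_closed_iff_infdist_zero[OF cU] by simp
        qed
        then show ?thesis using UU by blast
      qed
    qed
  qed
  show ?thesis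
    using part1 LJ acc part3 by blast
qed

end
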